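(* Let $P$ be a priority forest on $[n]_0$ with $m$ edges, and let $C$ be a maximal chain of $[\hat0,P]$ with Jordan–Hölder permutation $\lambda(C)$. Then $F_C(P)$, the ordered forest obtained from $P$ by relabeling each non-root vertex $v$ by $\lambda(C)^{-1}(v)$ and marking the root of the $k$-th component tree by $\circ_k$ (with $\circ_0=\circ$), is the unique ordered forest with priority traversal $\lambda(C)^{-1}$ and priority forest $P$.
   Context: $[n]=\{1,\dots,n\}$, $[n]_0=\{0,\dots,n\}$. A priority forest on $[n]_0$ is a rooted forest with vertex set $[n]_0$ whose component trees $T_0,T_1,\dots$ are increasing (each non-root vertex has a larger label than its parent) and satisfy: for $j<k$ every label of $T_j$ is smaller than every label of $T_k$. $\Pi(n)$ is the poset of priority forests on $[n]_0$ ordered by inclusion of edge sets, with an extra top element; $\hat0$ is the edgeless forest. For priority forests $Q\lessdot Q'$ (one edge added), $\lambda(Q,Q')$ is the larger endpoint of the edge in $E(Q')\setminus E(Q)$. A maximal chain $C:\hat0=P_0\lessdot\cdots\lessdot P_m=P$ has Jordan–Hölder permutation $\lambda(C):[m]\to[n]$, $i\mapsto\lambda(P_{i-1},P_i)$, which is injective; $\lambda(C)^{-1}:[n]\to[m]$ is the partial permutation defined on its image. An ordered $(m,n)$-forest is a rooted forest with $n+1$ nodes and $m$ edges whose component trees $T_0,\dots,T_{n-m}$ are totally ordered, with unlabeled roots marked $\circ,\circ_1,\dots,\circ_{n-m}$, and non-root vertices labeled bijectively by $[m]$. Priority search: initially only the children of $\circ$ are unblocked; at each step visit the unblocked unvisited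 node with the smallest label and unblock its children; when a tree is exhausted, move to the next tree, visit its root and unblock its children. Steps are numbered $1,\dots,n$ (the visit of $\circ$ is not counted). The priority traversal is the partial permutation $[n]\to[m]$ sending step $i$ to the label of the node visited at step $i$, undefined when that node is a root. The priority forest is obtained by relabeling each node by its visiting step, with $\circ$ labeled $0$. *)

theory Defs
  imports Main
begin

definition is_root :: "(nat \<times> nat) set \<Rightarrow> nat \<Rightarrow> bool" where
  "is_root E v \<longleftrightarrow> (\<forall>u. (u, v) \<notin> E)"

definition priority_forest :: "nat \<Rightarrow> (nat \<times> nat) set \<Rightarrow> bool" where
  "priority_forest n E \<longleftrightarrow>
     E \<subseteq> {0..n} \<times> {0..n}
   \<and> (\<forall>(u, v) \<in> E. u < v)
   \<and> (\<forall>u u' v. (u, v) \<in> E \<longrightarrow> (u', v) \<in> E \<longrightarrow> u = u')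
   \<and> (\<forall>r r' x y. r \<in> {0..n} \<longrightarrow> r' \<in> {0..n} \<longrightarrow> is_root E r \<longrightarrow> is_root E r'
        \<longrightarrow> r < r' \<longrightarrow> (r, x) \<in> E\<^sup>* \<longrightarrow> (r', y) \<in> E\<^sup>* \<longrightarrow> x < y)"

definition max_chain :: "nat \<Rightarrow> (nat \<times> nat) set \<Rightarrow> (nat \<times> nat) set list \<Rightarrow> bool" where
  "max_chain n E Ps \<longleftrightarrow>
     Ps \<noteq> [] \<and> Ps ! 0 = {} \<and> last Ps = E
   \<and> (\<forall>i < length Ps. priority_forest n (Ps ! i))
   \<and> (\<forall>i. Suc i < length Ps \<longrightarrow> Ps ! i \<subseteq> Ps ! Suc i \<and> card (Ps ! Suc i - Ps ! i) = 1)"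

definition jh :: "(nat \<times> nat) set list \<Rightarrow> nat \<Rightarrow> nat" where
  "jh Ps i = (let e = the_elem (Ps ! i - Ps ! (i - 1)) in max (fst e) (snd e))"

definition jh_inv :: "nat \<Rightarrow> (nat \<times> nat) set list \<Rightarrow> nat \<Rightarrow> nat option" where
  "jh_inv n Ps v =
     (if v \<in> {1..n} \<and> (\<exists>i \<in> {1..length Ps - 1}. jh Ps i = v)
      then Some (THE i. i \<in> {1..length Ps - 1} \<and> jh Ps i = v) else None)"

datatype onode = Root nat | Lab nat

definition onodes :: "nat \<Rightarrow> nat \<Rightarrow> onode set" where
  "onodes m n = Root ` {0..n - m} \<union> Lab ` {1..m}"

text \<open>Edge set of pairs (parent, child); Root k is the marked root of the k-th tree.\<close>

definition ordered_forest :: "nat \<Rightarrow> nat \<Rightarrow> (onode \<times> onode) set \<Rightarrow> bool" where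
  "ordered_forest m n F \<longleftrightarrow>
     m \<le> n
   \<and> F \<subseteq> onodes m n \<times> onodes m n
   \<and> (\<forall>(p, c) \<in> F. \<exists>j. c = Lab j)
   \<and> (\<forall>j \<in> {1..m}. \<exists>!p. (p, Lab j) \<in> F)
   \<and> (\<forall>j \<in> {1..m}. \<exists>k. (Root k, Lab j) \<in> F\<^sup>+)"

definition ochildren :: "(onode \<times> onode) set \<Rightarrow> onode \<Rightarrow> nat set" where
  "ochildren F x = {j. (x, Lab j) \<in> F}"

text \<open>Priority search; state = (index of current tree, unblocked unvisited labels, last visited node).\<close>

fun ps_step :: "(onode \<times> onode) set \<Rightarrow> nat \<times> nat set \<times> onode \<Rightarrow> nat \<times> nat set \<times> onode" where
  "ps_step F (k, U, _) =
     (if U \<noteq> {} then (let j = Min U in (k, (U - {j}) \<union> ochildren F (Lab j), Lab j))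
      else (Suc k, ochildren F (Root (Suc k)), Root (Suc k)))"

definition ps_visit :: "(onode \<times> onode) set \<Rightarrow> nat \<Rightarrow> onode" where
  "ps_visit F i = snd (snd ((ps_step F ^^ i) (0, ochildren F (Root 0), Root 0)))"

definition prio_trav :: "nat \<Rightarrow> (onode \<times> onode) set \<Rightarrow> nat \<Rightarrow> nat option" where
  "prio_trav n F i =
     (if i \<in> {1..n} then (case ps_visit F i of Lab j \<Rightarrow> Some j | Root _ \<Rightarrow> None) else None)"

definition visit_step :: "nat \<Rightarrow> (onode \<times> onode) set \<Rightarrow> onode \<Rightarrow> nat" where
  "visit_step n F x = (THE i. i \<le> n \<and> ps_visit F i = x)"

definition prio_forest_of :: "nat \<Rightarrow> (onode \<times> onode) set \<Rightarrow> (nat \<times> nat) set" where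
  "prio_forest_of n F = {(visit_step n F p, visit_step n F c) | p c. (p, c) \<in> F}"

definition root_index :: "nat \<Rightarrow> (nat \<times> nat) set \<Rightarrow> nat \<Rightarrow> nat" where
  "root_index n E r = card {r'. r' \<le> n \<and> is_root E r' \<and> r' < r}"

definition FC_relabel :: "nat \<Rightarrow> (nat \<times> nat) set \<Rightarrow> (nat \<times> nat) set list \<Rightarrow> nat \<Rightarrow> onode" where
  "FC_relabel n E Ps v =
     (if is_root E v then Root (root_index n E v) else Lab (the (jh_inv n Ps v)))"

definition FC :: "nat \<Rightarrow> (nat \<times> nat) set \<Rightarrow> (nat \<times> nat) set list \<Rightarrow> (onode \<times> onode) set" where
  "FC n E Ps = {(FC_relabel n E Ps p, FC_relabel n E Ps c) | p c. (p, c) \<in> E}"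

end

theory Submission
  imports Defs
begin


lemma rt_le: assumes "\<forall>(u,v)\<in>Q. u < (v::nat)" "(a,b) \<in> Q\<^sup>*" shows "a \<le> b"
  using assms(2) by (induction rule: rtrancl_induct) (use assms(1) in fastforce)+

lemma root_of: "\<forall>(u,v)\<in>Q. u < (v::nat) \<Longrightarrow> \<exists>r. is_root Q r \<and> (r,x) \<in> Q\<^sup>*"
proof (induction x rule: less_induct)
  case (less x)
  show ?case
  proof (cases "is_root Q x")
    case True then show ?thesis by blast
  next
    case False
    then obtain u where u: "(u,x) \<in> Q" unfolding is_root_def by blast
    with less.prems have "u < x" by blast
    with less obtain r where "is_root Q r" "(r,u) \<in> Q\<^sup>*" by blast
    with u show ?thesis by (meson rtrancl.rtrancl_into_rtrancl)
  qed
qed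

locale pfc =
  fixes n m :: nat and E :: "(nat \<times> nat) set" and Ps :: "(nat \<times> nat) set list"
  assumes pf: "priority_forest n E" and cardE: "card E = m" and mc: "max_chain n E Ps"
begin

lemma pf_all: "E \<subseteq> {0..n} \<times> {0..n}
   \<and> (\<forall>(u, v) \<in> E. u < v)
   \<and> (\<forall>u u' v. (u, v) \<in> E \<longrightarrow> (u', v) \<in> E \<longrightarrow> u = u')
   \<and> (\<forall>r r' x y. r \<in> {0..n} \<longrightarrow> r' \<in> {0..n} \<longrightarrow> is_root E r \<longrightarrow> is_root E r'
        \<longrightarrow> r < r' \<longrightarrow> (r, x) \<in> E\<^sup>* \<longrightarrow> (r', y) \<in> E\<^sup>* \<longrightarrow> x < y)"
  using pf unfolding priority_forest_def .
lemma E_sub: "E \<subseteq> {0..n} \<times> {0..n}" using pf_all by (rule conjunct1)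
lemma E_lt': "\<forall>(u,v)\<in>E. u < v" using pf_all by (elim conjE)
lemma E_lt: "(u,v) \<in> E \<Longrightarrow> u < v" using E_lt' by fast
lemma E_par: "(u,v) \<in> E \<Longrightarrow> (u',v) \<in> E \<Longrightarrow> u = u'"
proof -
  have "\<forall>u u' v. (u, v) \<in> E \<longrightarrow> (u', v) \<in> E \<longrightarrow> u = u'" using pf_all by (elim conjE)
  then show "(u,v) \<in> E \<Longrightarrow> (u',v) \<in> E \<Longrightarrow> u = u'" by metis
qed
lemma E_ord: "r \<le> n \<Longrightarrow> r' \<le> n \<Longrightarrow> is_root E r \<Longrightarrow> is_root E r' \<Longrightarrow> r < r'
   \<Longrightarrow> (r,x) \<in> E\<^sup>* \<Longrightarrow> (r',y) \<in> E\<^sup>* \<Longrightarrow> x < y"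
proof -
  assume a: "r \<le> n" "r' \<le> n" "is_root E r" "is_root E r'" "r < r'" "(r,x) \<in> E\<^sup>*" "(r',y) \<in> E\<^sup>*"
  have "\<forall>r r' x y. r \<in> {0..n} \<longrightarrow> r' \<in> {0..n} \<longrightarrow> is_root E r \<longrightarrow> is_root E r'
        \<longrightarrow> r < r' \<longrightarrow> (r, x) \<in> E\<^sup>* \<longrightarrow> (r', y) \<in> E\<^sup>* \<longrightarrow> x < y"
    using pf_all by (elim conjE)
  moreover have "r \<in> {0..n}" "r' \<in> {0..n}" using a by auto
  ultimately show "x < y" using a by blast
qed
lemma finE: "finite E" using E_sub finite_subset by blast

abbreviation "L \<equiv> length Ps"

lemma Ps_ne: "Ps \<noteq> []" using mc unfolding max_chain_def by blast
lemma Ps0: "Ps ! 0 = {}" using mc unfolding max_chain_def by blast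
lemma Ps_last: "Ps ! (L - 1) = E" using mc Ps_ne unfolding max_chain_def by (simp add: last_conv_nth)
lemma Ps_pf: "i < L \<Longrightarrow> priority_forest n (Ps ! i)" using mc unfolding max_chain_def by blast
lemma Ps_step: "Suc i < L \<Longrightarrow> Ps ! i \<subseteq> Ps ! Suc i \<and> card (Ps ! Suc i - Ps ! i) = 1"
  using mc unfolding max_chain_def by blast

lemma Ps_mono: "i \<le> j \<Longrightarrow> j < L \<Longrightarrow> Ps ! i \<subseteq> Ps ! j"
proof (induction j)
  case 0 then show ?case by simp
next
  case (Suc j)
  show ?case
  proof (cases "i = Suc j")
    case False
    then have "Ps ! i \<subseteq> Ps ! j" using Suc by simp
    then show ?thesis using Ps_step[of j] Suc.prems by blast
  qed simp
qed

lemma Ps_E: "i < L \<Longrightarrow> Ps ! i \<subseteq> E"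
  using Ps_mono[of i "L - 1"] Ps_last by simp

definition e :: "nat \<Rightarrow> nat \<times> nat" where "e i = the_elem (Ps ! i - Ps ! (i - 1))"

lemma e_diff: assumes "1 \<le> i" "i < L" shows "Ps ! i - Ps ! (i - 1) = {e i}"
proof -
  have "card (Ps ! i - Ps ! (i - 1)) = 1" using Ps_step[of "i - 1"] assms by simp
  then obtain x where "Ps ! i - Ps ! (i - 1) = {x}" by (meson card_1_singletonE)
  then show ?thesis unfolding e_def by simp
qed

lemma e_in: assumes "1 \<le> i" "i < L" shows "e i \<in> Ps ! i" "e i \<notin> Ps ! (i - 1)" "e i \<in> E"
  using e_diff[OF assms] Ps_E[OF assms(2)] by auto

lemma e_mem: assumes "1 \<le> i" "i < L" "j < L" shows "e i \<in> Ps ! j \<longleftrightarrow> i \<le> j"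
proof
  assume "e i \<in> Ps ! j"
  show "i \<le> j"
  proof (rule ccontr)
    assume "\<not> i \<le> j"
    then have "Ps ! j \<subseteq> Ps ! (i - 1)" using Ps_mono[of j "i - 1"] assms by simp
    then show False using e_in(2)[OF assms(1,2)] \<open>e i \<in> Ps ! j\<close> by blast
  qed
next
  assume "i \<le> j" then show "e i \<in> Ps ! j" using Ps_mono[of i j] e_in(1)[OF assms(1,2)] assms by blast
qed

lemma e_inj: "inj_on e {1..<L}"
proof (rule inj_onI)
  fix i j assume ij: "i \<in> {1..<L}" "j \<in> {1..<L}" "e i = e j"
  have "e i \<in> Ps ! j" using ij e_in(1)[of j] by simp
  then have "i \<le> j" using e_mem[of i j] ij by simp
  have "e j \<in> Ps ! i" using ij e_in(1)[of i] by simp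
  then have "j \<le> i" using e_mem[of j i] ij by simp
  with \<open>i \<le> j\<close> show "i = j" by simp
qed

lemma Ps_cover: "j < L \<Longrightarrow> Ps ! j = e ` {1..j}"
proof (induction j)
  case 0 then show ?case using Ps0 by simp
next
  case (Suc j)
  have d: "Ps ! Suc j - Ps ! j = {e (Suc j)}" using e_diff[of "Suc j"] Suc.prems by simp
  have s: "Ps ! j \<subseteq> Ps ! Suc j" using Ps_step[of j] Suc.prems by blast
  have "Ps ! Suc j = Ps ! j \<union> {e (Suc j)}" using d s by blast
  also have "Ps ! j = e ` {1..j}" using Suc by simp
  also have "e ` {1..j} \<union> {e (Suc j)} = e ` {1..Suc j}" by (simp add: atLeastAtMostSuc_conv)
  finally show ?case .
qed

lemma L_eq: "L = Suc m"
proof -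
  have "E = e ` {1..L - 1}" using Ps_cover[of "L - 1"] Ps_last Ps_ne by simp
  moreover have "inj_on e {1..L - 1}" using e_inj by (rule inj_on_subset) auto
  ultimately have "card E = L - 1" by (simp add: card_image)
  then show ?thesis using cardE Ps_ne by (cases Ps) auto
qed

end

context pfc begin

abbreviation "Ch \<equiv> snd ` E"

lemma e_E: "i \<in> {1..m} \<Longrightarrow> e i \<in> E" using e_in(3) L_eq by simp

lemma jh_e: "i \<in> {1..m} \<Longrightarrow> jh Ps i = snd (e i)"
proof -
  assume i: "i \<in> {1..m}"
  then have "fst (e i) < snd (e i)" using E_lt[of "fst (e i)" "snd (e i)"] e_E by simp
  then show ?thesis unfolding jh_def e_def[symmetric] Let_def by simp
qed

lemma e_inj': "inj_on e {1..m}" using e_inj L_eq by (simp add: atLeastLessThanSuc_atLeastAtMost)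

lemma E_e: "E = e ` {1..m}"
  using Ps_cover[of m] Ps_last L_eq by simp

lemma jh_inj: "inj_on (jh Ps) {1..m}"
proof (rule inj_onI)
  fix i j assume ij: "i \<in> {1..m}" "j \<in> {1..m}" "jh Ps i = jh Ps j"
  then have "snd (e i) = snd (e j)" using jh_e by simp
  moreover have "e i \<in> E" "e j \<in> E" using ij e_E by auto
  ultimately have "e i = e j" using E_par by (metis prod.collapse)
  then show "i = j" using e_inj' ij by (meson inj_onD)
qed

lemma jh_img: "jh Ps ` {1..m} = Ch"
proof -
  have "jh Ps ` {1..m} = snd ` e ` {1..m}" using jh_e by (auto simp: image_image)
  then show ?thesis using E_e by simp
qed

lemma Ch_range: "v \<in> Ch \<Longrightarrow> 1 \<le> v \<and> v \<le> n"
proof -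
  assume "v \<in> Ch"
  then obtain u where u: "(u,v) \<in> E" by force
  then have "u < v" by (rule E_lt)
  moreover have "v \<le> n" using u E_sub by auto
  ultimately show ?thesis by simp
qed

lemma root_iff: "is_root E v \<longleftrightarrow> v \<notin> Ch"
  unfolding is_root_def by force

lemma root0: "is_root E 0" unfolding is_root_def using E_lt by blast

definition lam :: "nat \<Rightarrow> nat" where "lam v = the (jh_inv n Ps v)"

lemma jh_inv_None: "v \<notin> Ch \<Longrightarrow> jh_inv n Ps v = None"
  unfolding jh_inv_def using jh_img L_eq by auto

lemma lam_props: assumes "v \<in> Ch" shows "jh_inv n Ps v = Some (lam v)" "lam v \<in> {1..m}" "jh Ps (lam v) = v"
proof -
  obtain i where i: "i \<in> {1..m}" "jh Ps i = v" using assms jh_img by force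
  have th: "(THE i. i \<in> {1..length Ps - 1} \<and> jh Ps i = v) = i"
    using i jh_inj L_eq by (auto intro!: the_equality dest: inj_onD)
  have "jh_inv n Ps v = Some i" unfolding jh_inv_def th using i Ch_range[OF assms] L_eq by auto
  then show "jh_inv n Ps v = Some (lam v)" "lam v \<in> {1..m}" "jh Ps (lam v) = v"
    using i unfolding lam_def by auto
qed

lemma lam_e: "(p,v) \<in> E \<Longrightarrow> e (lam v) = (p,v)"
proof -
  assume pv: "(p,v) \<in> E"
  then have v: "v \<in> Ch" by force
  have "e (lam v) \<in> E" using lam_props(2)[OF v] e_E by simp
  moreover have "snd (e (lam v)) = v" using lam_props[OF v] jh_e by simp
  ultimately show ?thesis using pv E_par by (metis prod.collapse)
qed

lemma lam_inj: "v \<in> Ch \<Longrightarrow> w \<in> Ch \<Longrightarrow> lam v = lam w \<Longrightarrow> v = w"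
  using lam_props(3) by metis

lemma lam_surj: "j \<in> {1..m} \<Longrightarrow> \<exists>v\<in>Ch. lam v = j"
proof -
  assume j: "j \<in> {1..m}"
  let ?v = "jh Ps j"
  have v: "?v \<in> Ch" using j jh_img by blast
  have "lam ?v = j" using lam_props[OF v] j jh_inj by (meson inj_onD)
  then show ?thesis using v by blast
qed

lemma key: assumes pv: "(p,v) \<in> E" and qi: "(q,i) \<in> E" and "p < i" "i < v"
  shows "lam i < lam v"
proof (rule ccontr)
  assume "\<not> lam i < lam v"
  moreover have "lam i \<noteq> lam v" using lam_inj[of i v] pv qi assms(4) by force
  ultimately have lt: "lam v < lam i" by simp
  have iC: "i \<in> Ch" "v \<in> Ch" using pv qi by force+
  have lv: "lam v \<in> {1..m}" "lam i \<in> {1..m}" using lam_props(2) iC by auto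
  define Q where "Q = Ps ! lam v"
  have QL: "lam v < L" using lv L_eq by simp
  have QE: "Q \<subseteq> E" unfolding Q_def using Ps_E[OF QL] .
  have Qpf: "priority_forest n Q" unfolding Q_def using Ps_pf[OF QL] .
  have Qlt: "\<forall>(u,v)\<in>Q. u < v" using QE E_lt by blast
  have pvQ: "(p,v) \<in> Q" unfolding Q_def using lam_e[OF pv] e_in(1)[of "lam v"] lv QL by simp
  have ri: "is_root Q i"
    unfolding is_root_def
  proof (intro allI notI)
    fix u assume "(u,i) \<in> Q"
    then have "(u,i) \<in> E" using QE by blast
    then have "u = q" using qi E_par by blast
    then have "e (lam i) \<in> Q" using lam_e[OF qi] \<open>(u,i) \<in> Q\<close> by simp
    then have "lam i \<le> lam v" unfolding Q_def using e_mem[of "lam i" "lam v"] lv QL L_eq by simp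
    then show False using lt by simp
  qed
  obtain r where r: "is_root Q r" "(r,p) \<in> Q\<^sup>*" using root_of[OF Qlt] by blast
  have "r \<le> p" using rt_le[OF Qlt r(2)] .
  have rv: "(r,v) \<in> Q\<^sup>*" using r(2) pvQ by (meson rtrancl.rtrancl_into_rtrancl)
  have "i \<le> n" using qi E_sub by auto
  have all: "\<forall>r r' x y. r \<in> {0..n} \<longrightarrow> r' \<in> {0..n} \<longrightarrow> is_root Q r \<longrightarrow> is_root Q r'
        \<longrightarrow> r < r' \<longrightarrow> (r, x) \<in> Q\<^sup>* \<longrightarrow> (r', y) \<in> Q\<^sup>* \<longrightarrow> x < y"
    using Qpf unfolding priority_forest_def by (elim conjE)
  have "r \<in> {0..n}" "i \<in> {0..n}" "r < i" using \<open>r \<le> p\<close> \<open>i \<le> n\<close> assms(3) by auto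
  then have "v < i" using all r(1) ri rv by blast
  then show False using assms(4) by simp
qed

lemma rootR: assumes "is_root E i" "i \<le> n" "(p,v) \<in> E" "p < i" shows "v < i"
proof -
  obtain r where r: "is_root E r" "(r,p) \<in> E\<^sup>*" using root_of[OF E_lt'] by blast
  have "r \<le> p" using rt_le[OF E_lt' r(2)] .
  have rv: "(r,v) \<in> E\<^sup>*" using r(2) assms(3) by (meson rtrancl.rtrancl_into_rtrancl)
  show ?thesis using E_ord[of r i v i] r(1) assms \<open>r \<le> p\<close> rv by simp
qed

end

context pfc begin

abbreviation "FCr \<equiv> FC_relabel n E Ps"
abbreviation "FCE \<equiv> FC n E Ps"

lemma FCr_root: "is_root E v \<Longrightarrow> FCr v = Root (root_index n E v)"
  unfolding FC_relabel_def by simp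
lemma FCr_lab: "v \<in> Ch \<Longrightarrow> FCr v = Lab (lam v)"
  unfolding FC_relabel_def lam_def using root_iff by simp

lemma fin_roots: "finite {r'. r' \<le> n \<and> is_root E r' \<and> r' < b}" by simp

lemma root_index_mono: assumes "a < b" "is_root E a" "b \<le> n"
  shows "root_index n E a < root_index n E b"
proof -
  let ?A = "{r'. r' \<le> n \<and> is_root E r' \<and> r' < a}"
  let ?B = "{r'. r' \<le> n \<and> is_root E r' \<and> r' < b}"
  have s: "?A \<subseteq> ?B" using assms(1) by (auto simp del: is_root_def)
  have "a \<in> ?B" "a \<notin> ?A" using assms by (auto simp del: is_root_def)
  then have "?A \<subset> ?B" using s by blast
  moreover have "finite ?B" using fin_roots .
  ultimately show ?thesis unfolding root_index_def by (rule psubset_card_mono[rotated])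
qed

lemma FCr_inj: "inj_on FCr {0..n}"
proof (rule inj_onI)
  fix a b assume ab: "a \<in> {0..n}" "b \<in> {0..n}" "FCr a = FCr b"
  show "a = b"
  proof (cases "is_root E a")
    case ra: True
    show ?thesis
    proof (cases "is_root E b")
      case rb: True
      then have "root_index n E a = root_index n E b" using ab ra FCr_root by simp
      then show ?thesis using root_index_mono[of a b] root_index_mono[of b a] ra rb ab
        by (metis atLeastAtMost_iff linorder_neqE_nat nat_less_le)
    next
      case False
      then show ?thesis using ab ra FCr_root FCr_lab root_iff by simp
    qed
  next
    case ra: False
    show ?thesis
    proof (cases "is_root E b")
      case rb: True
      then show ?thesis using ab ra FCr_root FCr_lab root_iff by simp
    next
      case False
      then show ?thesis using ab ra FCr_lab root_iff lam_inj by simp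
    qed
  qed
qed

lemma FCr_inj': "a \<le> n \<Longrightarrow> b \<le> n \<Longrightarrow> FCr a = FCr b \<longleftrightarrow> a = b"
  using FCr_inj by (auto dest: inj_onD)

lemma FC_mem: "(x,y) \<in> FCE \<longleftrightarrow> (\<exists>a b. (a,b) \<in> E \<and> x = FCr a \<and> y = FCr b)"
  unfolding FC_def by blast

lemma ochildren_FCr: assumes "a \<le> n" shows "ochildren FCE (FCr a) = lam ` {v. (a,v) \<in> E}"
proof (intro equalityI subsetI)
  fix j assume "j \<in> ochildren FCE (FCr a)"
  then obtain a' b where ab0: "(a',b) \<in> E" "FCr a = FCr a'" "Lab j = FCr b"
    unfolding ochildren_def FC_mem by blast
  then have ab: "(a',b) \<in> E" "FCr a' = FCr a" "FCr b = Lab j" by simp_all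
  have "a' = a" using ab E_sub assms FCr_inj' by auto
  moreover have "b \<in> Ch" using ab by force
  ultimately show "j \<in> lam ` {v. (a,v) \<in> E}" using ab FCr_lab by auto
next
  fix j assume "j \<in> lam ` {v. (a,v) \<in> E}"
  then obtain v where v: "(a,v) \<in> E" "j = lam v" by blast
  then have "v \<in> Ch" by force
  then have "(FCr a, Lab j) \<in> FCE" using v FCr_lab FC_mem by metis
  then show "j \<in> ochildren FCE (FCr a)" unfolding ochildren_def by simp
qed

definition kk :: "nat \<Rightarrow> nat" where "kk i = card {r. r \<le> i \<and> is_root E r} - 1"
definition UU :: "nat \<Rightarrow> nat set" where "UU i = lam ` {v. \<exists>p. (p,v) \<in> E \<and> p \<le> i \<and> i < v}"

lemma UU_fin: "finite (UU i)"
proof -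
  have "{v. \<exists>p. (p,v) \<in> E \<and> p \<le> i \<and> i < v} \<subseteq> Ch" by force
  then show ?thesis unfolding UU_def using finE by (meson finite_imageI finite_subset)
qed

lemma FCr0: "FCr 0 = Root 0"
  using FCr_root[OF root0] unfolding root_index_def by simp

lemma iter: "i \<le> n \<Longrightarrow> (ps_step FCE ^^ i) (0, ochildren FCE (Root 0), Root 0) = (kk i, UU i, FCr i)"
proof (induction i)
  case 0
  have "{r. r \<le> 0 \<and> is_root E r} = {0}" using root0 by auto
  then have "kk 0 = 0" unfolding kk_def by simp
  moreover have "UU 0 = lam ` {v. (0,v) \<in> E}" unfolding UU_def using E_lt by fastforce
  ultimately show ?case using ochildren_FCr[of 0] FCr0 by simp
next
  case (Suc i)
  have IH: "(ps_step FCE ^^ i) (0, ochildren FCE (Root 0), Root 0) = (kk i, UU i, FCr i)"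
    using Suc by simp
  have fr: "finite {r. r \<le> i \<and> is_root E r}" by simp
  have c1: "card {r. r \<le> i \<and> is_root E r} \<ge> 1"
    using root0 fr by (metis (mono_tags, lifting) One_nat_def Suc_leI card_gt_0_iff empty_iff le0 mem_Collect_eq)
  show ?case
  proof (cases "is_root E (Suc i)")
    case True
    have Uemp: "UU i = {}"
    proof -
      { fix p v assume "(p,v) \<in> E" "p \<le> i" "i < v"
        then have "v < Suc i" using rootR[OF True Suc.prems] by simp
        with \<open>i < v\<close> have False by simp }
      then show ?thesis unfolding UU_def by blast
    qed
    have set_eq: "{r. r \<le> Suc i \<and> is_root E r} = insert (Suc i) {r. r \<le> i \<and> is_root E r}"
      using True by auto
    have kS: "kk (Suc i) = Suc (kk i)"
      unfolding kk_def set_eq using fr c1 by simp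
    have ri: "root_index n E (Suc i) = Suc (kk i)"
    proof -
      have "{r'. r' \<le> n \<and> is_root E r' \<and> r' < Suc i} = {r. r \<le> i \<and> is_root E r}"
        using Suc.prems by auto
      then show ?thesis unfolding root_index_def kk_def using c1 by simp
    qed
    have FS: "FCr (Suc i) = Root (Suc (kk i))" using FCr_root[OF True] ri by simp
    have US: "UU (Suc i) = lam ` {v. (Suc i, v) \<in> E}"
    proof -
      have "{v. \<exists>p. (p,v) \<in> E \<and> p \<le> Suc i \<and> Suc i < v} = {v. (Suc i, v) \<in> E}"
      proof (intro equalityI subsetI)
        fix v assume "v \<in> {v. \<exists>p. (p,v) \<in> E \<and> p \<le> Suc i \<and> Suc i < v}"
        then obtain p where p: "(p,v) \<in> E" "p \<le> Suc i" "Suc i < v" by blast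
        show "v \<in> {v. (Suc i, v) \<in> E}"
        proof (cases "p = Suc i")
          case False
          then have "v < Suc i" using rootR[OF True Suc.prems p(1)] p(2) by simp
          then show ?thesis using p(3) by simp
        qed (use p in simp)
      next
        fix v assume "v \<in> {v. (Suc i, v) \<in> E}"
        then show "v \<in> {v. \<exists>p. (p,v) \<in> E \<and> p \<le> Suc i \<and> Suc i < v}" using E_lt by blast
      qed
      then show ?thesis unfolding UU_def by simp
    qed
    have "(ps_step FCE ^^ Suc i) (0, ochildren FCE (Root 0), Root 0) = ps_step FCE (kk i, UU i, FCr i)"
      using IH by simp
    also have "\<dots> = (Suc (kk i), ochildren FCE (Root (Suc (kk i))), Root (Suc (kk i)))"
      using Uemp by simp
    also have "\<dots> = (kk (Suc i), UU (Suc i), FCr (Suc i))"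
      using kS FS US ochildren_FCr[OF Suc.prems] by simp
    finally show ?thesis .
  next
    case False
    then have SC: "Suc i \<in> Ch" using root_iff by simp
    then obtain q where q: "(q, Suc i) \<in> E" by force
    have "q < Suc i" using E_lt[OF q] .
    then have inU: "lam (Suc i) \<in> UU i" unfolding UU_def using q by fastforce
    have minU: "Min (UU i) = lam (Suc i)"
    proof (rule Min_eqI[OF UU_fin _ inU])
      fix y assume "y \<in> UU i"
      then obtain p v where pv: "(p,v) \<in> E" "p \<le> i" "i < v" "y = lam v" unfolding UU_def by blast
      show "lam (Suc i) \<le> y"
      proof (cases "v = Suc i")
        case False
        then have "lam (Suc i) < lam v" using key[OF pv(1) q] pv by simp
        then show ?thesis using pv by simp
      qed (use pv in simp)
    qed
    have Une: "UU i \<noteq> {}" using inU by blast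
    have kS: "kk (Suc i) = kk i"
    proof -
      have "{r. r \<le> Suc i \<and> is_root E r} = {r. r \<le> i \<and> is_root E r}"
        using False le_Suc_eq by auto
      then show ?thesis unfolding kk_def by simp
    qed
    have FS: "FCr (Suc i) = Lab (lam (Suc i))" using FCr_lab[OF SC] .
    have US: "UU i - {lam (Suc i)} \<union> ochildren FCE (Lab (lam (Suc i))) = UU (Suc i)"
    proof -
      have och: "ochildren FCE (Lab (lam (Suc i))) = lam ` {v. (Suc i, v) \<in> E}"
        using ochildren_FCr[OF Suc.prems] FS by simp
      show ?thesis
      proof (intro equalityI subsetI)
        fix y assume y: "y \<in> UU i - {lam (Suc i)} \<union> ochildren FCE (Lab (lam (Suc i)))"
        show "y \<in> UU (Suc i)"
        proof (cases "y \<in> ochildren FCE (Lab (lam (Suc i)))")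
          case True
          then obtain v where "(Suc i, v) \<in> E" "y = lam v" using och by blast
          then show ?thesis unfolding UU_def using E_lt by fastforce
        next
          case False
          then have "y \<in> UU i" "y \<noteq> lam (Suc i)" using y by auto
          then obtain p v where pv: "(p,v) \<in> E" "p \<le> i" "i < v" "y = lam v" unfolding UU_def by blast
          then have "v \<noteq> Suc i" using \<open>y \<noteq> lam (Suc i)\<close> by blast
          then have "Suc i < v" using pv by simp
          then show ?thesis unfolding UU_def using pv by fastforce
        qed
      next
        fix y assume "y \<in> UU (Suc i)"
        then obtain p v where pv: "(p,v) \<in> E" "p \<le> Suc i" "Suc i < v" "y = lam v" unfolding UU_def by blast
        show "y \<in> UU i - {lam (Suc i)} \<union> ochildren FCE (Lab (lam (Suc i)))"
        proof (cases "p = Suc i")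
          case True
          then show ?thesis using och pv by blast
        next
          case False
          then have "p \<le> i" using pv by simp
          then have "y \<in> UU i" unfolding UU_def using pv by fastforce
          moreover have "v \<in> Ch" using pv by force
          moreover have "y \<noteq> lam (Suc i)"
          proof
            assume "y = lam (Suc i)"
            then have "v = Suc i" using lam_inj[OF \<open>v \<in> Ch\<close> SC] pv by simp
            then show False using pv by simp
          qed
          ultimately show ?thesis by blast
        qed
      qed
    qed
    have "(ps_step FCE ^^ Suc i) (0, ochildren FCE (Root 0), Root 0) = ps_step FCE (kk i, UU i, FCr i)"
      using IH by simp
    also have "\<dots> = (kk i, UU i - {lam (Suc i)} \<union> ochildren FCE (Lab (lam (Suc i))), Lab (lam (Suc i)))"
      using Une minU by (simp add: Let_def)
    also have "\<dots> = (kk (Suc i), UU (Suc i), FCr (Suc i))"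
      using kS FS US by simp
    finally show ?thesis .
  qed
qed

lemma visit_FC: "i \<le> n \<Longrightarrow> ps_visit FCE i = FCr i"
  unfolding ps_visit_def using iter by simp

end


definition isR :: "onode \<Rightarrow> bool" where "isR x = (\<exists>k. x = Root k)"

lemma G: "fst ((ps_step F ^^ i) (0, ochildren F (Root 0), Root 0)) = card {j \<in> {1..i}. isR (ps_visit F j)}
   \<and> (\<forall>k. ps_visit F i = Root k \<longrightarrow> k = fst ((ps_step F ^^ i) (0, ochildren F (Root 0), Root 0)))"
proof (induction i)
  case 0 then show ?case by (simp add: ps_visit_def)
next
  case (Suc i)
  obtain k U x where st: "(ps_step F ^^ i) (0, ochildren F (Root 0), Root 0) = (k, U, x)" by (metis prod.collapse)
  have k: "k = card {j \<in> {1..i}. isR (ps_visit F j)}" using Suc st by simp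
  have S: "{j \<in> {1..Suc i}. isR (ps_visit F j)} = {j \<in> {1..i}. isR (ps_visit F j)} \<union> (if isR (ps_visit F (Suc i)) then {Suc i} else {})"
    by (auto simp: le_Suc_eq)
  have fin: "finite {j \<in> {1..i}. isR (ps_visit F j)}" by simp
  show ?case
  proof (cases "U = {}")
    case True
    then have st': "(ps_step F ^^ Suc i) (0, ochildren F (Root 0), Root 0) = (Suc k, ochildren F (Root (Suc k)), Root (Suc k))"
      using st by simp
    then have "ps_visit F (Suc i) = Root (Suc k)" unfolding ps_visit_def by simp
    then show ?thesis using st' k S fin by (simp add: isR_def)
  next
    case False
    then have st': "(ps_step F ^^ Suc i) (0, ochildren F (Root 0), Root 0) = (k, (U - {Min U}) \<union> ochildren F (Lab (Min U)), Lab (Min U))"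
      using st by (simp add: Let_def)
    then have "ps_visit F (Suc i) = Lab (Min U)" unfolding ps_visit_def by simp
    then show ?thesis using st' k S by (simp add: isR_def)
  qed
qed

lemma G': "ps_visit F i = Root k \<Longrightarrow> k = card {j \<in> {1..i}. isR (ps_visit F j)}"
  using G[where F=F and i=i] by simp

context pfc begin

lemma cardCh: "card Ch = m"
proof -
  have "inj_on snd E" by (rule inj_onI) (metis E_par prod.collapse)
  then show ?thesis using cardE card_image by blast
qed

lemma Ch_sub: "Ch \<subseteq> {1..n}" using Ch_range by (meson atLeastAtMost_iff subsetI)

lemma m_le: "m \<le> n" using cardCh Ch_sub by (metis card_atLeastAtMost card_mono diff_Suc_1 finite_atLeastAtMost)

lemma card_roots: "card {r. r \<le> n \<and> is_root E r} = Suc n - m"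
proof -
  have "{r. r \<le> n \<and> is_root E r} = {0..n} - Ch" using root_iff by auto
  moreover have "Ch \<subseteq> {0..n}" using Ch_sub by auto
  ultimately show ?thesis using cardCh by (simp add: card_Diff_subset finite_subset)
qed

lemma FCr_onodes: assumes "a \<le> n" shows "FCr a \<in> onodes m n"
proof (cases "is_root E a")
  case True
  let ?A = "{r'. r' \<le> n \<and> is_root E r' \<and> r' < a}"
  let ?B = "{r. r \<le> n \<and> is_root E r}"
  have "?A \<subset> ?B" using True assms by auto
  then have "card ?A < card ?B" by (intro psubset_card_mono) auto
  then have "root_index n E a \<le> n - m" unfolding root_index_def card_roots by simp
  then show ?thesis using FCr_root[OF True] unfolding onodes_def by auto
next
  case False
  then have "a \<in> Ch" using root_iff by simp
  then show ?thesis using FCr_lab lam_props(2) unfolding onodes_def by auto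
qed

lemma card_onodes: "card (onodes m n) = Suc n"
proof -
  have "card (Root ` {0..n - m}) = Suc (n - m)" by (simp add: card_image inj_on_def)
  moreover have "card (Lab ` {1..m}) = m" by (simp add: card_image inj_on_def)
  moreover have "Root ` {0..n - m} \<inter> Lab ` {1..m} = {}" by auto
  ultimately show ?thesis unfolding onodes_def using m_le by (simp add: card_Un_disjoint)
qed

lemma FCr_surj: "FCr ` {0..n} = onodes m n"
proof (rule card_subset_eq)
  show "finite (onodes m n)" unfolding onodes_def by simp
  show "FCr ` {0..n} \<subseteq> onodes m n" using FCr_onodes by auto
  show "card (FCr ` {0..n}) = card (onodes m n)" using card_onodes FCr_inj by (simp add: card_image)
qed

lemma FC_trancl: "(a,b) \<in> E\<^sup>+ \<Longrightarrow> (FCr a, FCr b) \<in> FCE\<^sup>+"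
proof (induction rule: trancl_induct)
  case (base y) then show ?case using FC_mem by blast
next
  case (step y z)
  then have "(FCr y, FCr z) \<in> FCE" using FC_mem by blast
  then show ?case using step by (meson trancl.trancl_into_trancl)
qed

lemma part1: "ordered_forest m n FCE"
  unfolding ordered_forest_def
proof (intro conjI ballI)
  show "m \<le> n" by (rule m_le)
  show "FCE \<subseteq> onodes m n \<times> onodes m n"
  proof
    fix x assume "x \<in> FCE"
    then obtain a b where "(a,b) \<in> E" "x = (FCr a, FCr b)" unfolding FC_def by blast
    then show "x \<in> onodes m n \<times> onodes m n" using E_sub FCr_onodes by auto
  qed
next
  fix x assume "x \<in> FCE"
  then obtain a b where ab: "(a,b) \<in> E" "x = (FCr a, FCr b)" unfolding FC_def by blast
  then have "b \<in> Ch" by force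
  then show "case x of (p, c) \<Rightarrow> \<exists>j. c = Lab j" using ab FCr_lab by simp
next
  fix j assume j: "j \<in> {1..m}"
  obtain v where v: "v \<in> Ch" "lam v = j" using lam_surj[OF j] by blast
  obtain q where q: "(q,v) \<in> E" using v by force
  have ex: "(FCr q, Lab j) \<in> FCE" using q v FCr_lab FC_mem by metis
  show "\<exists>!p. (p, Lab j) \<in> FCE"
  proof (rule ex1I[where a="FCr q"])
    show "(FCr q, Lab j) \<in> FCE" by (rule ex)
  next
    fix p assume "(p, Lab j) \<in> FCE"
    then obtain a b where ab: "(a,b) \<in> E" "p = FCr a" "Lab j = FCr b" using FC_mem by blast
    have "b \<in> Ch" using ab by force
    then have "lam b = j" using ab FCr_lab by simp
    then have "b = v" using lam_inj[OF \<open>b \<in> Ch\<close> v(1)] v by simp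
    then have "a = q" using ab q E_par by simp
    then show "p = FCr q" using ab by simp
  qed
next
  fix j assume j: "j \<in> {1..m}"
  obtain v where v: "v \<in> Ch" "lam v = j" using lam_surj[OF j] by blast
  obtain r where r: "is_root E r" "(r,v) \<in> E\<^sup>*" using root_of[OF E_lt'] by blast
  have "r \<noteq> v" using r(1) v(1) root_iff by blast
  then have "(r,v) \<in> E\<^sup>+" using r(2) by (meson rtranclD)
  then have "(FCr r, FCr v) \<in> FCE\<^sup>+" by (rule FC_trancl)
  then show "\<exists>k. (Root k, Lab j) \<in> FCE\<^sup>+" using FCr_root[OF r(1)] FCr_lab[OF v(1)] v(2) by auto
qed

lemma part2: "prio_trav n FCE = jh_inv n Ps"
proof
  fix i show "prio_trav n FCE i = jh_inv n Ps i"
  proof (cases "i \<in> {1..n}")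
    case True
    show ?thesis
    proof (cases "i \<in> Ch")
      case True
      then show ?thesis using \<open>i \<in> {1..n}\<close> visit_FC[of i] FCr_lab lam_props(1) unfolding prio_trav_def by simp
    next
      case False
      then show ?thesis using \<open>i \<in> {1..n}\<close> visit_FC[of i] FCr_root root_iff jh_inv_None unfolding prio_trav_def by simp
    qed
  next
    case False
    then show ?thesis unfolding prio_trav_def jh_inv_def by auto
  qed
qed

lemma vs_FC: "a \<le> n \<Longrightarrow> visit_step n FCE (FCr a) = a"
  unfolding visit_step_def
proof (rule the_equality)
  assume "a \<le> n" then show "a \<le> n \<and> ps_visit FCE a = FCr a" using visit_FC by simp
next
  fix i assume "a \<le> n" "i \<le> n \<and> ps_visit FCE i = FCr a"
  then show "i = a" using visit_FC FCr_inj' by metis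
qed

lemma part3: "prio_forest_of n FCE = E"
proof -
  have "prio_forest_of n FCE = {(visit_step n FCE (FCr a), visit_step n FCE (FCr b)) | a b. (a,b) \<in> E}"
    unfolding prio_forest_of_def FC_def by blast
  also have "\<dots> = E"
  proof -
    have "\<And>a b. (a,b) \<in> E \<Longrightarrow> (visit_step n FCE (FCr a), visit_step n FCE (FCr b)) = (a,b)"
      using vs_FC E_sub by auto
    then show ?thesis by force
  qed
  finally show ?thesis .
qed

lemma part4: assumes "ordered_forest m n F" "prio_trav n F = jh_inv n Ps" "prio_forest_of n F = E"
  shows "F = FCE"
proof -
  have pt: "prio_trav n F = prio_trav n FCE" using assms(2) part2 by simp
  have isReq: "isR (ps_visit F j) = isR (ps_visit FCE j)" if "j \<in> {1..n}" for j
  proof -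
    have "prio_trav n F j = prio_trav n FCE j" using pt by simp
    then show ?thesis using that unfolding prio_trav_def isR_def
      by (cases "ps_visit F j"; cases "ps_visit FCE j") auto
  qed
  have veq: "ps_visit F i = ps_visit FCE i" if "i \<le> n" for i
  proof (cases "i = 0")
    case True then show ?thesis by (simp add: ps_visit_def)
  next
    case False
    then have i: "i \<in> {1..n}" using that by simp
    have "prio_trav n F i = prio_trav n FCE i" using pt by simp
    then have tr: "(case ps_visit F i of Lab j \<Rightarrow> Some j | Root _ \<Rightarrow> None) = (case ps_visit FCE i of Lab j \<Rightarrow> Some j | Root _ \<Rightarrow> None)"
      using i unfolding prio_trav_def by simp
    have cs: "{j \<in> {1..i}. isR (ps_visit F j)} = {j \<in> {1..i}. isR (ps_visit FCE j)}"
      using isReq i by auto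
    show ?thesis
    proof (cases "ps_visit F i")
      case (Root k)
      then obtain k' where k': "ps_visit FCE i = Root k'" using tr by (cases "ps_visit FCE i") auto
      have "k = k'" using G'[OF Root] G'[OF k'] cs by simp
      then show ?thesis using Root k' by simp
    next
      case (Lab j)
      then show ?thesis using tr by (cases "ps_visit FCE i") auto
    qed
  qed
  have vseq: "visit_step n F = visit_step n FCE"
  proof
    fix x
    have "(\<lambda>i. i \<le> n \<and> ps_visit F i = x) = (\<lambda>i. i \<le> n \<and> ps_visit FCE i = x)" using veq by auto
    then show "visit_step n F x = visit_step n FCE x" unfolding visit_step_def by simp
  qed
  have Fsub: "F \<subseteq> onodes m n \<times> onodes m n" using assms(1) unfolding ordered_forest_def by blast
  have onode_rep: "x \<in> onodes m n \<Longrightarrow> \<exists>a\<le>n. x = FCr a" for x using FCr_surj by force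
  have PF: "prio_forest_of n F = {(visit_step n FCE p, visit_step n FCE c) | p c. (p, c) \<in> F}"
    unfolding prio_forest_of_def vseq ..
  show ?thesis
  proof (intro equalityI subsetI)
    fix x assume x: "x \<in> F"
    then obtain p c where pc: "x = (p,c)" by (cases x)
    then have "p \<in> onodes m n" "c \<in> onodes m n" using x Fsub by auto
    then obtain a b where ab: "a \<le> n" "b \<le> n" "p = FCr a" "c = FCr b" using onode_rep by metis
    have "(visit_step n FCE p, visit_step n FCE c) \<in> E" using assms(3) PF x pc by blast
    then have "(a,b) \<in> E" using ab vs_FC by simp
    then show "x \<in> FCE" using pc ab FC_mem by blast
  next
    fix x assume x: "x \<in> FCE"
    then obtain a b where ab: "(a,b) \<in> E" "x = (FCr a, FCr b)" using FC_mem by (cases x) blast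
    then have "(a,b) \<in> prio_forest_of n F" using assms(3) by simp
    then obtain p c where pc: "(p,c) \<in> F" "a = visit_step n FCE p" "b = visit_step n FCE c"
      unfolding PF by blast
    then have "p \<in> onodes m n" "c \<in> onodes m n" using Fsub by auto
    then obtain a' b' where ab': "a' \<le> n" "b' \<le> n" "p = FCr a'" "c = FCr b'" using onode_rep by metis
    have "a' = a" "b' = b" using pc ab' vs_FC by auto
    then show "x \<in> F" using pc ab ab' by simp
  qed
qed

end


theorem lemma3p2:
  fixes n m :: nat and E :: "(nat \<times> nat) set" and Ps :: "(nat \<times> nat) set list"
  assumes "priority_forest n E"
    and "card E = m"
    and "max_chain n E Ps"
  shows "ordered_forest m n (FC n E Ps)
       \<and> prio_trav n (FC n E Ps) = jh_inv n Ps
       \<and> prio_forest_of n (FC n E Ps) = E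
       \<and> (\<forall>F. ordered_forest m n F \<and> prio_trav n F = jh_inv n Ps \<and> prio_forest_of n F = E
              \<longrightarrow> F = FC n E Ps)"
proof -
  interpret pfc n m E Ps using assms by unfold_locales
  show ?thesis using part1 part2 part3 part4 by blast
qed

end
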